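(* If $p\le 1-1/e^2$, then for every $n$ we have $x_0(n)=0$.
   Context: Let $p\in(0,1)$ be constant, $q=1-p$, $b=1/q$, $\gamma=\gamma(n)=2\log_b n-2\log_b\log_b n-2\log_b 2$, $\Delta=\gamma-\lfloor\gamma\rfloor\in[0,1)$. Define $\varphi(x)=\varphi_n(x)=(1-\Delta+x)\log_b(1-\Delta+x)+(1-\Delta)(\Delta-x)/2$, and let $x_0=x_0(n)$ be the smallest nonnegative $x$ with $\varphi_n(x)\le0$ (well defined since $\varphi_n(\Delta)=0$, and $x_0\in[0,\Delta]$). *)

theory Defs
  imports Complex_Main
begin

definition gamma_n :: "real \<Rightarrow> nat \<Rightarrow> real" where
  "gamma_n p n = (let b = 1 / (1 - p) in
     2 * log b (real n) - 2 * log b (log b (real n)) - 2 * log b 2)"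

definition Delta_n :: "real \<Rightarrow> nat \<Rightarrow> real" where
  "Delta_n p n = gamma_n p n - of_int \<lfloor>gamma_n p n\<rfloor>"

definition phi_n :: "real \<Rightarrow> nat \<Rightarrow> real \<Rightarrow> real" where
  "phi_n p n x = (let b = 1 / (1 - p); \<Delta> = Delta_n p n in
     (1 - \<Delta> + x) * log b (1 - \<Delta> + x) + (1 - \<Delta>) * (\<Delta> - x) / 2)"

definition x0_n :: "real \<Rightarrow> nat \<Rightarrow> real" where
  "x0_n p n = (LEAST x::real. 0 \<le> x \<and> phi_n p n x \<le> 0)"

end

theory Submission
  imports Defs
begin

lemma phi0:
  fixes p :: real
  assumes "0 < p" "p < 1" "p \<le> 1 - 1 / exp 2"
  shows "phi_n p n 0 \<le> 0"
proof -
  define D where "D = Delta_n p n"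
  define t where "t = 1 - D"
  define b where "b = 1 / (1 - p)"
  have D01: "0 \<le> D" "D < 1" unfolding D_def Delta_n_def by linarith+
  hence t: "0 < t" "t \<le> 1" unfolding t_def by auto
  have lb: "ln b = - ln (1 - p)" unfolding b_def using assms by (simp add: ln_div)
  have "1 / exp 2 \<le> 1 - p" using assms by linarith
  hence "ln (1 / exp 2) \<le> ln (1 - p)" using assms by (subst ln_le_cancel_iff) auto
  hence "-2 \<le> ln (1 - p)" by (simp add: ln_div)
  moreover have "ln (1 - p) < 0" using assms by simp
  ultimately have lb2: "0 < ln b" "ln b \<le> 2" using lb by auto
  have "ln t \<le> t - 1" using t by (simp add: ln_le_minus_one)
  also have "t - 1 \<le> - (1 - t) * ln b / 2"
  proof -
    have "(1 - t) * ln b \<le> (1 - t) * 2" using lb2 t by (intro mult_left_mono) auto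
    thus ?thesis by (simp add: algebra_simps)
  qed
  finally have "ln t \<le> - (1 - t) * ln b / 2" .
  hence "ln t / ln b \<le> - (1 - t) / 2" using lb2 by (simp add: divide_simps)
  hence "t * (ln t / ln b) \<le> t * (- (1 - t) / 2)" using t by (intro mult_left_mono) auto
  hence "t * log b t + t * (1 - t) / 2 \<le> 0" by (simp add: log_def field_simps)
  thus ?thesis unfolding phi_n_def Let_def b_def[symmetric] D_def[symmetric] t_def
    by (simp add: algebra_simps)
qed

theorem lemma3:
  fixes p :: real
  assumes "0 < p" "p < 1" "p \<le> 1 - 1 / exp 2"
  shows "\<forall>n::nat. n \<ge> 2 \<longrightarrow> x0_n p n = 0"
proof (intro allI impI)
  fix n :: nat
  show "x0_n p n = 0" unfolding x0_n_def
    by (rule Least_equality) (use phi0[OF assms, of n] in auto)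
qed

end
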